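(* Let $V$ be a finite set and let $A$ be a real symmetric matrix indexed by $V$. If $A$ does not contain any self-contained family of weighted chordless walks, then $A$ has a simplicial vertex.
   Context: An element $v\in V$ is simplicial in $A$ if $A_{yz}\ge\min\{A_{vy},A_{vz}\}$ for all distinct $y,z\in V\setminus\{v\}$. A walk is an ordered sequence $W=(v_0,\dots,v_p)$ ($p\ge1$) of elements of $V$; $V(W)=\{v_0,\dots,v_p\}$, $I(W)=\{v_1,\dots,v_{p-1}\}$. $W$ is weighted chordless in $A$ if $A_{v_{i-1}v_{i+1}}<\min\{A_{v_{i-1}v_i},A_{v_{i+1}v_i}\}$ for $1\le i\le p-1$. A finite family $\{W_1,\dots,W_k\}$ of walks is self-contained if $\bigcup_h V(W_h)=\bigcup_h I(W_h)$. *)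

theory Defs
  imports Complex_Main
begin

text \<open>A real symmetric matrix indexed by a finite set V is modelled as a function
  A :: 'a \<Rightarrow> 'a \<Rightarrow> real, symmetric on V.
  A walk (v_0,...,v_p), p \<ge> 1, is a list of length p+1 \<ge> 2.\<close>

definition simplicial :: "'a set \<Rightarrow> ('a \<Rightarrow> 'a \<Rightarrow> real) \<Rightarrow> 'a \<Rightarrow> bool" where
  "simplicial V A v \<longleftrightarrow> v \<in> V \<and>
     (\<forall>y \<in> V - {v}. \<forall>z \<in> V - {v}. y \<noteq> z \<longrightarrow> A y z \<ge> min (A v y) (A v z))"

definition walk :: "'a set \<Rightarrow> 'a list \<Rightarrow> bool" where
  "walk V W \<longleftrightarrow> length W \<ge> 2 \<and> set W \<subseteq> V"

definition walk_verts :: "'a list \<Rightarrow> 'a set" where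
  "walk_verts W = set W"

definition walk_inner :: "'a list \<Rightarrow> 'a set" where
  "walk_inner W = {W ! i | i. 1 \<le> i \<and> i + 1 < length W}"

definition weighted_chordless :: "('a \<Rightarrow> 'a \<Rightarrow> real) \<Rightarrow> 'a list \<Rightarrow> bool" where
  "weighted_chordless A W \<longleftrightarrow>
     (\<forall>i. 1 \<le> i \<and> i + 1 < length W \<longrightarrow>
        A (W ! (i - 1)) (W ! (i + 1)) < min (A (W ! (i - 1)) (W ! i)) (A (W ! (i + 1)) (W ! i)))"

definition self_contained :: "'a list set \<Rightarrow> bool" where
  "self_contained F \<longleftrightarrow> (\<Union>W\<in>F. walk_verts W) = (\<Union>W\<in>F. walk_inner W)"

definition has_sc_chordless_family :: "'a set \<Rightarrow> ('a \<Rightarrow> 'a \<Rightarrow> real) \<Rightarrow> bool" where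
  "has_sc_chordless_family V A \<longleftrightarrow>
     (\<exists>F. finite F \<and> F \<noteq> {} \<and> (\<forall>W\<in>F. walk V W \<and> weighted_chordless A W) \<and> self_contained F)"

end

theory Submission
  imports Defs
begin

lemma inner3: "walk_inner [a,b,c] = {b}"
  unfolding walk_inner_def
proof (rule set_eqI, rule iffI)
  fix x assume "x \<in> {[a, b, c] ! i |i. 1 \<le> i \<and> i + 1 < length [a, b, c]}"
  then obtain i where "x = [a,b,c] ! i" "1 \<le> i" "i + 1 < 3" by auto
  then have "i = 1" "x = [a,b,c] ! i" by linarith+
  then show "x \<in> {b}" by simp
next
  fix x assume "x \<in> {b}"
  then have "x = [a,b,c] ! 1 \<and> 1 \<le> (1::nat) \<and> 1 + 1 < length [a, b, c]" by simp
  then show "x \<in> {[a, b, c] ! i |i. 1 \<le> i \<and> i + 1 < length [a, b, c]}" by blast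
qed

lemma wc3:
  assumes "A a c < min (A a b) (A c b)"
  shows "weighted_chordless A [a,b,c]"
  unfolding weighted_chordless_def
proof (intro allI impI)
  fix i :: nat assume "1 \<le> i \<and> i + 1 < length [a,b,c]"
  then have "i = 1" by auto
  then show "A ([a,b,c] ! (i - 1)) ([a,b,c] ! (i + 1)) < min (A ([a,b,c] ! (i - 1)) ([a,b,c] ! i)) (A ([a,b,c] ! (i + 1)) ([a,b,c] ! i))"
    using assms by simp
qed

theorem lemma6:
  fixes V :: "'a set" and A :: "'a \<Rightarrow> 'a \<Rightarrow> real"
  assumes "finite V" and "V \<noteq> {}"
    and "\<forall>x\<in>V. \<forall>y\<in>V. A x y = A y x"
    and "\<not> has_sc_chordless_family V A"
  shows "\<exists>v\<in>V. simplicial V A v"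
proof (rule ccontr)
  assume nt: "\<not> ?thesis"
  have "\<forall>v\<in>V. \<exists>p. fst p \<in> V - {v} \<and> snd p \<in> V - {v} \<and> fst p \<noteq> snd p
      \<and> A (fst p) (snd p) < min (A v (fst p)) (A v (snd p))"
  proof
    fix v assume v: "v \<in> V"
    with nt have "\<not> simplicial V A v" by blast
    then obtain y z where yz: "y \<in> V - {v}" "z \<in> V - {v}" "y \<noteq> z" "\<not> A y z \<ge> min (A v y) (A v z)"
      using v unfolding simplicial_def by blast
    show "\<exists>p. fst p \<in> V - {v} \<and> snd p \<in> V - {v} \<and> fst p \<noteq> snd p
      \<and> A (fst p) (snd p) < min (A v (fst p)) (A v (snd p))"
      apply (rule exI[of _ "(y,z)"]) using yz by auto
  qed
  then obtain P where P: "\<And>v. v \<in> V \<Longrightarrow> fst (P v) \<in> V - {v} \<and> snd (P v) \<in> V - {v}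
      \<and> A (fst (P v)) (snd (P v)) < min (A v (fst (P v))) (A v (snd (P v)))"
    by (metis (no_types, lifting))
  define F where "F = (\<lambda>v. [fst (P v), v, snd (P v)]) ` V"
  have "finite F" "F \<noteq> {}" using assms(1,2) unfolding F_def by auto
  moreover have "\<forall>W\<in>F. walk V W \<and> weighted_chordless A W"
  proof
    fix W assume "W \<in> F"
    then obtain v where v: "v \<in> V" "W = [fst (P v), v, snd (P v)]" unfolding F_def by auto
    have "A (fst (P v)) (snd (P v)) < min (A (fst (P v)) v) (A (snd (P v)) v)"
      proof -
      have "fst (P v) \<in> V" "snd (P v) \<in> V" using P[OF v(1)] by auto
      then show ?thesis using P[OF v(1)] assms(3) v(1) by simp
    qed
    then show "walk V W \<and> weighted_chordless A W"
      using P[OF v(1)] v unfolding walk_def by (auto intro: wc3)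
  qed
  moreover have "self_contained F"
  proof -
    have "(\<Union>W\<in>F. walk_inner W) = V" unfolding F_def by (simp add: inner3)
    moreover have "(\<Union>W\<in>F. walk_verts W) = V"
      unfolding F_def walk_verts_def using P by auto
    ultimately show ?thesis unfolding self_contained_def by simp
  qed
  ultimately show False using assms(4) unfolding has_sc_chordless_family_def by blast
qed

end
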